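(* Let $S$ be a poset and let $S\otimes_i G_i$ and $S\otimes_i H_i$ be terminating ordered joins in the same shape $S$. Suppose $i_0\in S$ is a maximal element of $S$ and $G_i=H_i$ for all $i\neq i_0$. If $G_{i_0}\simeq_0 H_{i_0}$, then $S\otimes_i G_i \simeq_0 S\otimes_i H_i$.
   Context: All games are impartial combinatorial games under normal play; a game is determined by its set of options, and $G \to G'$ means $G'$ is an option of $G$. A game is terminating if it admits no infinite sequence of moves. $\mathbf{0}$ denotes the game with no options. The Grundy number of a terminating game $G$ is the ordinal $\Gamma_0(G)=\operatorname{mex}\{\Gamma_0(G') : G\to G'\}$, where $\operatorname{mex}\Lambda$ is the least ordinal not in the set of ordinals $\Lambda$. Games $G,H$ are $0$-equivalent, $G\simeq_0 H$, if $\Gamma_0(G)=\Gamma_0(H)$. Ordered join: for a poset $S$ and a family $(G_i)_{i\in S}$ of games, $S \otimes_i G_i$ is the game whose options are exactly the ordered joins $S \otimes_i G'_i$ obtained by choosing one $i_0\in S$ and an option $G_{i_0}\to G'_{i_0}$, and setting $G'_i=\mathbf{0}$ for all $i>i_0$ and $G'_i=G_i$ for all other $i\ne i_0$. *)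

theory Defs
  imports Main
begin

text \<open>Impartial games are represented as positions in a game graph: a type of positions
  together with a move relation mv, where mv x y means that y is an option of x.\<close>

definition terminating :: "('p \<Rightarrow> 'p \<Rightarrow> bool) \<Rightarrow> 'p \<Rightarrow> bool" where
  "terminating mv x \<longleftrightarrow> \<not> (\<exists>s. s 0 = x \<and> (\<forall>n. mv (s n) (s (Suc n))))"

text \<open>The relation "y is an option of the terminating position x"; it is well-founded.\<close>
definition term_rel :: "('p \<Rightarrow> 'p \<Rightarrow> bool) \<Rightarrow> ('p \<times> 'p) set" where
  "term_rel mv = {(y, x). mv x y \<and> terminating mv x}"

definition mex :: "'o::wellorder set \<Rightarrow> 'o" where
  "mex A = (LEAST a. a \<notin> A)"

text \<open>Grundy number, with values in a well-ordered type 'o playing the role of the ordinals.\<close>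
definition grundy :: "('p \<Rightarrow> 'p \<Rightarrow> bool) \<Rightarrow> 'p \<Rightarrow> 'o::wellorder" where
  "grundy mv = wfrec (term_rel mv) (\<lambda>g x. mex (g ` {y. mv x y}))"

definition equiv0 :: "'o::wellorder itself \<Rightarrow> ('p \<Rightarrow> 'p \<Rightarrow> bool) \<Rightarrow> 'p \<Rightarrow> 'p \<Rightarrow> bool" where
  "equiv0 _ mv x y \<longleftrightarrow> (grundy mv x :: 'o) = grundy mv y"

text \<open>Ordered join over the poset 'i: a position is a family of component positions
  (i \<mapsto> G_i); z is the zero game (a position with no options).\<close>
definition join_move :: "('g \<Rightarrow> 'g \<Rightarrow> bool) \<Rightarrow> 'g \<Rightarrow> ('i::order \<Rightarrow> 'g) \<Rightarrow> ('i \<Rightarrow> 'g) \<Rightarrow> bool" where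
  "join_move mv z F F' \<longleftrightarrow>
     (\<exists>i0 g'. mv (F i0) g' \<and>
        F' = (\<lambda>i. if i = i0 then g' else if i0 < i then z else F i))"

end

theory Submission
  imports Defs
begin

lemma wf_term_rel: "wf (term_rel mv)"
  unfolding wf_iff_no_infinite_down_chain term_rel_def
proof
  assume "\<exists>f. \<forall>i. (f (Suc i), f i) \<in> {(y, x). mv x y \<and> terminating mv x}"
  then obtain f where f: "\<And>i. mv (f i) (f (Suc i))" "terminating mv (f 0)" by blast
  then show False unfolding terminating_def by blast
qed

lemma term_step: "terminating mv x \<Longrightarrow> mv x y \<Longrightarrow> terminating mv y"
  unfolding terminating_def
proof (elim contrapos_nn)
  assume "mv x y" "\<exists>s. s 0 = y \<and> (\<forall>n. mv (s n) (s (Suc n)))"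
  then obtain s where s: "s 0 = y" "\<forall>n. mv (s n) (s (Suc n))" by blast
  let ?t = "\<lambda>n. case n of 0 \<Rightarrow> x | Suc m \<Rightarrow> s m"
  have "\<forall>n. mv (?t n) (?t (Suc n))" using s \<open>mv x y\<close> by (auto split: nat.split)
  then show "\<exists>s. s 0 = x \<and> (\<forall>n. mv (s n) (s (Suc n)))" by (intro exI[of _ ?t]) auto
qed

lemma grundy_eq: "terminating mv x \<Longrightarrow> grundy mv x = mex (grundy mv ` {y. mv x y})"
  unfolding grundy_def
  apply (subst wfrec[OF wf_term_rel])
  apply (rule arg_cong[where f=mex])
  apply (auto simp: cut_def term_rel_def)
  done

lemma mex_notin: "\<forall>y. (f y :: 'o::wellorder) < b \<Longrightarrow> mex (f ` A) \<notin> f ` A"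
  unfolding mex_def by (rule LeastI[of _ b]) (auto simp: less_irrefl dest: spec[of _ b])

lemma G1: assumes "\<forall>y. (grundy mv y :: 'o::wellorder) < b" "terminating mv x" "mv x y"
  shows "(grundy mv y :: 'o) \<noteq> grundy mv x"
  using mex_notin[OF assms(1), of "{y. mv x y}"] grundy_eq[OF assms(2)] assms(3)
  by (metis (mono_tags) image_eqI mem_Collect_eq)

lemma G2: assumes "\<forall>y. (grundy mv y :: 'o::wellorder) < b" "terminating mv x" "a < (grundy mv x :: 'o)"
  shows "\<exists>y. mv x y \<and> grundy mv y = a"
  using assms(3) grundy_eq[OF assms(2)] not_less_Least[of a "\<lambda>a. a \<notin> grundy mv ` {y. mv x y}"]
  unfolding mex_def by (metis (mono_tags, lifting) image_iff mem_Collect_eq)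

lemma G3: assumes "terminating mv x" "\<forall>y. mv x y \<longrightarrow> (grundy mv y :: 'o::wellorder) \<noteq> v"
  shows "(grundy mv x :: 'o) \<le> v"
  using assms grundy_eq[OF assms(1)] unfolding mex_def
  by (metis (mono_tags, lifting) Least_le image_iff mem_Collect_eq)


lemma J_i0:
  assumes "\<forall>i. \<not> i0 < (i::'i::order)" "mv (F i0) g"
  shows "join_move mv z F (F(i0 := g))"
  unfolding join_move_def using assms by (intro exI[of _ i0] exI[of _ g]) (auto simp: fun_eq_iff)

lemma J_cases:
  assumes "\<forall>i. \<not> i0 < (i::'i::order)" "join_move mv z F F1"
  obtains g where "mv (F i0) g" "F1 = F(i0 := g)"
  | j g where "j \<noteq> i0" "mv (F j) g" "F1 = (\<lambda>i. if i = j then g else if j < i then z else F i)"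
  using assms unfolding join_move_def by (force simp: fun_eq_iff)

lemma trancl2: "(a,b) \<in> r \<Longrightarrow> (b,c) \<in> r \<Longrightarrow> (a,c) \<in> r\<^sup>+" by auto

lemma core:
  fixes mv :: "'g \<Rightarrow> 'g \<Rightarrow> bool" and z :: 'g and i0 :: "'i::order"
  assumes bg: "\<forall>y. (grundy mv y :: 'o::wellorder) < bg"
    and bj: "\<forall>F::'i \<Rightarrow> 'g. (grundy (join_move mv z) F :: 'o) < bj"
    and maximal: "\<forall>i. \<not> i0 < i"
  shows "\<forall>F'. terminating (join_move mv z) F \<longrightarrow> terminating (join_move mv z) F'
     \<longrightarrow> (\<forall>i. i \<noteq> i0 \<longrightarrow> F i = F' i) \<longrightarrow> (grundy mv (F i0) :: 'o) = grundy mv (F' i0)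
     \<longrightarrow> (grundy (join_move mv z) F :: 'o) = grundy (join_move mv z) F'"
proof (induction F rule: wf_induct[OF wf_trancl[OF wf_term_rel[of "join_move mv z"]]])
  case (1 F)
  note outer = 1
  let ?J = "join_move mv z :: ('i \<Rightarrow> 'g) \<Rightarrow> _"
  have Ji: "?J X (X(i0 := g))" if "mv (X i0) g" for X g
    using J_i0[of i0 mv X g z] maximal that by blast
  let ?gr = "grundy ?J :: _ \<Rightarrow> 'o"
  let ?g = "grundy mv :: _ \<Rightarrow> 'o"
  have termi: "terminating mv (X i0)" if "terminating ?J X" for X
    unfolding terminating_def
  proof
    assume "\<exists>s. s 0 = X i0 \<and> (\<forall>n. mv (s n) (s (Suc n)))"
    then obtain s where s: "s 0 = X i0" "\<forall>n. mv (s n) (s (Suc n))" by blast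
    have "\<forall>n. ?J (X(i0 := s n)) (X(i0 := s (Suc n)))"
      using J_i0[OF maximal, of mv "X(i0 := s n)" for n] s by auto
    moreover have "X(i0 := s 0) = X" using s by auto
    ultimately have "\<exists>s. s 0 = X \<and> (\<forall>n. ?J (s n) (s (Suc n)))"
      by (intro exI[of _ "\<lambda>n. X(i0 := s n)"]) simp
    then show False using that unfolding terminating_def by blast
  qed
  have desc: "(F1, X) \<in> (term_rel ?J)\<^sup>+" if "terminating ?J X" "?J X F1" for X F1
    using that by (auto simp: term_rel_def)
  have desc2: "(F2, X) \<in> (term_rel ?J)\<^sup>+" if "terminating ?J X" "?J X F1" "?J F1 F2" for X F1 F2
    using that term_step[of ?J X F1] by (intro trancl2[of _ F1]) (auto simp: term_rel_def)
  show ?case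
  proof (intro allI)
    fix F'
    show "terminating ?J F \<longrightarrow> terminating ?J F' \<longrightarrow> (\<forall>i. i \<noteq> i0 \<longrightarrow> F i = F' i)
       \<longrightarrow> ?g (F i0) = ?g (F' i0) \<longrightarrow> ?gr F = ?gr F'"
    proof (induction F' rule: wf_induct[OF wf_trancl[OF wf_term_rel[of "join_move mv z"]]])
      case (1 F')
      note inner = 1
      show ?case
      proof (intro impI)
        assume tF: "terminating ?J F" and tF': "terminating ?J F'"
          and ag: "\<forall>i. i \<noteq> i0 \<longrightarrow> F i = F' i" and gi: "?g (F i0) = ?g (F' i0)"
        have side: "?gr F1' \<noteq> ?gr F" if "?J F' F1'" for F1'
          using J_cases[OF maximal that]
        proof cases
          case (1 h)
          have th: "terminating mv h" using termi[OF tF'] 1 term_step by metis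
          have ne: "?g h \<noteq> ?g (F' i0)" using G1[of mv, OF bg termi[OF tF'] 1(1)] .
          show ?thesis
          proof (cases "?g h < ?g (F' i0)")
            case True
            then obtain g where g: "mv (F i0) g" "?g g = ?g h" using G2[OF bg termi[OF tF]] gi by metis
            have "?gr (F(i0 := g)) = ?gr F1'"
              using outer[rule_format, of "F(i0 := g)" F1'] desc[OF tF Ji[of F g, OF g(1)]]
                term_step[of ?J, OF tF Ji[of F g, OF g(1)]] term_step[of ?J, OF tF' that] ag g 1
              by auto
            then show ?thesis using G1[of ?J, OF bj tF Ji[of F g, OF g(1)]] by simp
          next
            case False
            then have "?g (F' i0) < ?g h" using ne by auto
            then obtain h2 where h2: "mv h h2" "?g h2 = ?g (F' i0)" using G2[OF bg th] by metis
            have j2: "?J F1' (F'(i0 := h2))" using Ji[of F1' h2] 1 h2 by simp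
            have "?gr F = ?gr (F'(i0 := h2))"
              using inner[rule_format, OF desc2[OF tF' that j2] tF] term_step[of ?J, OF term_step[of ?J, OF tF' that] j2]
                ag h2 gi by auto
            then show ?thesis using G1[of ?J, OF bj term_step[of ?J, OF tF' that] j2] by simp
          qed
        next
          case (2 j g)
          define F1 where "F1 = (\<lambda>i. if i = j then g else if j < i then z else F i)"
          have jF: "?J F F1" unfolding join_move_def F1_def using 2 ag by (intro exI[of _ j] exI[of _ g]) auto
          have "?gr F1 = ?gr F1'"
          proof (cases "j < i0")
            case True
            have "F1 = F1'" using 2 ag True by (auto simp: F1_def fun_eq_iff)
            then show ?thesis by simp
          next
            case False
            show ?thesis
              using outer[rule_format, of F1 F1'] desc[OF tF jF] term_step[of ?J, OF tF jF]
                term_step[of ?J, OF tF' that] ag gi 2 False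
              by (auto simp: F1_def)
          qed
          then show ?thesis using G1[of ?J, OF bj tF jF] by simp
        qed
        have side2: "?gr F1 \<noteq> ?gr F'" if "?J F F1" for F1
          using J_cases[OF maximal that]
        proof cases
          case (1 g)
          have th: "terminating mv g" using termi[OF tF] 1 term_step by metis
          have ne: "?g g \<noteq> ?g (F i0)" using G1[of mv, OF bg termi[OF tF] 1(1)] .
          show ?thesis
          proof (cases "?g g < ?g (F i0)")
            case True
            then obtain h where h: "mv (F' i0) h" "?g h = ?g g" using G2[OF bg termi[OF tF']] gi by metis
            have "?gr F1 = ?gr (F'(i0 := h))"
              using outer[rule_format, of F1 "F'(i0 := h)"] desc[OF tF that]
                term_step[of ?J, OF tF that] term_step[of ?J, OF tF' Ji[of F' h, OF h(1)]] ag h 1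
              by auto
            then show ?thesis using G1[of ?J, OF bj tF' Ji[of F' h, OF h(1)]] by simp
          next
            case False
            then have "?g (F i0) < ?g g" using ne by auto
            then obtain g2 where g2: "mv g g2" "?g g2 = ?g (F i0)" using G2[OF bg th] by metis
            have j2: "?J F1 (F(i0 := g2))" using Ji[of F1 g2] 1 g2 by simp
            have "?gr (F(i0 := g2)) = ?gr F'"
              using outer[rule_format, of "F(i0 := g2)" F', OF desc2[OF tF that j2]]
                term_step[of ?J, OF term_step[of ?J, OF tF that] j2] tF' ag g2 gi by auto
            then show ?thesis using G1[of ?J, OF bj term_step[of ?J, OF tF that] j2] by simp
          qed
        next
          case (2 j g)
          define F1' where "F1' = (\<lambda>i. if i = j then g else if j < i then z else F' i)"
          have jF: "?J F' F1'" unfolding join_move_def F1'_def using 2 ag by (intro exI[of _ j] exI[of _ g]) auto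
          have "?gr F1 = ?gr F1'"
          proof (cases "j < i0")
            case True
            have "F1 = F1'" using 2 ag True by (auto simp: F1'_def fun_eq_iff)
            then show ?thesis by simp
          next
            case False
            show ?thesis
              using outer[rule_format, of F1 F1'] desc[OF tF that] term_step[of ?J, OF tF that]
                term_step[of ?J, OF tF' jF] ag gi 2 False
              by (auto simp: F1'_def)
          qed
          then show ?thesis using G1[of ?J, OF bj tF' jF] by simp
        qed
        have "?gr F \<le> ?gr F'" using G3[OF tF] side2 by blast
        moreover have "?gr F' \<le> ?gr F" using G3[OF tF'] side by blast
        ultimately show "?gr F = ?gr F'" by simp
      qed
    qed
  qed
qed


theorem mainTheorem3:
  fixes mv :: "'g \<Rightarrow> 'g \<Rightarrow> bool" and z :: 'g
    and G H :: "'i::order \<Rightarrow> 'g" and i0 :: 'i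
  assumes ord_large: "\<forall>f :: ('i \<Rightarrow> 'g) \<Rightarrow> 'o::wellorder. \<exists>b. \<forall>x. f x < b"
    and zero: "\<forall>y. \<not> mv z y"
    and termG: "terminating (join_move mv z) G"
    and termH: "terminating (join_move mv z) H"
    and maximal: "\<forall>i. \<not> i0 < i"
    and same: "\<forall>i. i \<noteq> i0 \<longrightarrow> G i = H i"
    and eq0: "equiv0 TYPE('o) mv (G i0) (H i0)"
  shows "equiv0 TYPE('o) (join_move mv z) G H"
proof -
  obtain bg :: 'o where bg0: "\<forall>x::'i \<Rightarrow> 'g. grundy mv (x i0) < bg"
    using ord_large[rule_format, of "\<lambda>x. grundy mv (x i0)"] by blast
  have bg: "\<forall>y. (grundy mv y :: 'o) < bg"
  proof
    fix y show "(grundy mv y :: 'o) < bg" using bg0[rule_format, of "\<lambda>_. y"] by simp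
  qed
  obtain bj :: 'o where bj: "\<forall>x::'i \<Rightarrow> 'g. grundy (join_move mv z) x < bj"
    using ord_large[rule_format, of "grundy (join_move mv z)"] by blast
  show ?thesis
    using core[OF bg bj maximal, of G] termG termH same eq0 unfolding equiv0_def by blast
qed

end
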